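(* Let $\beta>0$ and $\kappa=\frac{1}{\pi\beta}$, so that $\tilde\kappa=\kappa\beta=\frac1\pi$. Then, as $\beta\to0$, $$\min_{\mathcal J}F_{\beta,\kappa}=\frac{1-\sqrt{1-4\tilde\kappa^2}}{4\beta}-\frac{\tilde\kappa}{2\beta}\arcsin(2\tilde\kappa)+o_\beta(\beta^n)\quad\text{for all }n\in\mathbb N^*.$$
   Context: For parameters $\beta>0$ and $\kappa>0$ define, for $\varphi\in H^1((0,1))$, $$F_{\beta,\kappa}(\varphi)=\frac18\int_0^1\left(\varphi'(x)^2+\frac{1}{\beta^2}\sin^2\varphi(x)\right)dx-\frac{\kappa}{2}\int_0^1\varphi'(x)\,dx,$$ and $\mathcal J=\{\varphi\in H^1((0,1)):\varphi(0)=0\}$. The notation $o_\beta$ refers to the limit $\beta\to0$. *)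

theory Defs
  imports "HOL-Analysis.Analysis" "HOL-Library.Landau_Symbols"
begin

text \<open>phi is in H^1((0,1)) with weak derivative g: g and g^2 are integrable on [0,1]
  and phi is (the continuous representative) phi(x) = phi(0) + integral of g over [0,x].\<close>
definition H1_with_deriv :: "(real \<Rightarrow> real) \<Rightarrow> (real \<Rightarrow> real) \<Rightarrow> bool" where
  "H1_with_deriv \<phi> g \<longleftrightarrow>
     set_integrable lborel {0..1} g \<and>
     set_integrable lborel {0..1} (\<lambda>x. (g x)^2) \<and>
     (\<forall>x\<in>{0..1}. \<phi> x = \<phi> 0 + (LBINT t=0..x. g t))"

definition F_energy :: "real \<Rightarrow> real \<Rightarrow> (real \<Rightarrow> real) \<Rightarrow> (real \<Rightarrow> real) \<Rightarrow> real" where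
  "F_energy \<beta> \<kappa> \<phi> g =
     1/8 * (LBINT x=0..1. (g x)^2 + (sin (\<phi> x))^2 / \<beta>^2) - \<kappa>/2 * (LBINT x=0..1. g x)"

definition min_F :: "real \<Rightarrow> real \<Rightarrow> real" where
  "min_F \<beta> \<kappa> = Inf {F_energy \<beta> \<kappa> \<phi> g | \<phi> g. H1_with_deriv \<phi> g \<and> \<phi> 0 = 0}"

end

theory Submission
  imports Defs
begin

definition GG :: "real \<Rightarrow> real" where
  "GG p = (LBINT s=ereal 0..ereal p. \<bar>sin s\<bar>)"

lemma GG_deriv: "(GG has_real_derivative \<bar>sin p\<bar>) (at p)"
proof -
  define b where "b = \<bar>p\<bar> + 1"
  have "((\<lambda>u. LBINT y=ereal 0..ereal u. \<bar>sin y\<bar>) has_vector_derivative \<bar>sin p\<bar>) (at p within {-b..b})"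
  proof (rule interval_integral_FTC2[of "-b" 0 b "\<lambda>y. \<bar>sin y\<bar>" p])
    show "continuous_on {-b..b} (\<lambda>y. \<bar>sin y\<bar>)" by (intro continuous_intros)
    show "-b \<le> 0" "0 \<le> b" "-b \<le> p" "p \<le> b" unfolding b_def by linarith+
  qed
  moreover have "p \<in> interior {-b..b}" unfolding b_def interior_atLeastAtMost_real by (cases "p \<ge> 0") auto
  ultimately have "((\<lambda>u. LBINT y=ereal 0..ereal u. \<bar>sin y\<bar>) has_vector_derivative \<bar>sin p\<bar>) (at p)"
    using at_within_interior by metis
  then show ?thesis unfolding GG_def has_real_derivative_iff_has_vector_derivative .
qed


lemma GG_0: "GG 0 = 0" unfolding GG_def by (rule interval_integral_endpoints_same)

lemma GG_closed: assumes "0 \<le> q" "q \<le> pi" shows "GG q = 1 - cos q"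
proof -
  have "(LBINT s=ereal 0..ereal q. \<bar>sin s\<bar>) = (- cos q) - (- cos 0)"
  proof (rule interval_integral_FTC_finite)
    show "continuous_on {min 0 q..max 0 q} (\<lambda>s. \<bar>sin s\<bar>)" by (intro continuous_intros)
    fix x assume x: "min 0 q \<le> x" "x \<le> max 0 q"
    then have "0 \<le> x" "x \<le> pi" using assms by auto
    then have "sin x \<ge> 0" by (simp add: sin_ge_zero)
    have "((\<lambda>x. - cos x) has_real_derivative sin x) (at x)"
      by (auto intro!: derivative_eq_intros)
    then have "((\<lambda>x. - cos x) has_real_derivative \<bar>sin x\<bar>) (at x within {min 0 q..max 0 q})"
      using \<open>sin x \<ge> 0\<close> by (simp add: has_field_derivative_at_within)
    then show "((\<lambda>x. - cos x) has_vector_derivative \<bar>sin x\<bar>) (at x within {min 0 q..max 0 q})"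
      unfolding has_real_derivative_iff_has_vector_derivative .
  qed
  then show ?thesis by (simp add: GG_def)
qed

lemma GG_period: "GG (p + pi) = GG p + 2"
proof -
  have "\<forall>x. ((\<lambda>p. GG (p + pi) - GG p) has_real_derivative 0) (at x)"
  proof
    fix x
    have d0: "((\<lambda>p. p + pi) has_real_derivative 1) (at x)"
      by (auto intro!: derivative_eq_intros)
    have d1: "((\<lambda>p. GG (p + pi)) has_real_derivative (\<bar>sin (x+pi)\<bar> * 1)) (at x)"
      by (rule DERIV_chain2[OF GG_deriv d0])
    have "((\<lambda>p. GG (p + pi) - GG p) has_real_derivative (\<bar>sin (x+pi)\<bar> * 1 - \<bar>sin x\<bar>)) (at x)"
      by (rule DERIV_diff[OF d1 GG_deriv])
    then show "((\<lambda>p. GG (p + pi) - GG p) has_real_derivative 0) (at x)" by simp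
  qed
  from DERIV_isconst_all[OF this, of p 0]
  have "GG (p + pi) - GG p = GG pi - GG 0" by simp
  also have "\<dots> = 2" using GG_closed[of pi] by (simp add: GG_0)
  finally show ?thesis by simp
qed

definition hh :: "real \<Rightarrow> real" where "hh p = GG p / 4 - p / (2*pi)"

lemma hh_period: "hh (p + pi) = hh p"
  by (simp only: hh_def GG_period) (simp add: field_simps)

lemma hh_period_nat: "hh (p + real n * pi) = hh p"
proof (induction n arbitrary: p)
  case 0 then show ?case by simp
next
  case (Suc n)
  have "p + real (Suc n) * pi = (p + real n * pi) + pi" by (simp add: algebra_simps)
  then have "hh (p + real (Suc n) * pi) = hh (p + real n * pi)" by (simp only: hh_period)
  then show ?case using Suc by simp
qed

lemma hh_period_int: "hh (p + real_of_int k * pi) = hh p"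
proof (cases "k \<ge> 0")
  case True
  then have "real_of_int k = real (nat k)" by simp
  then show ?thesis by (simp only: hh_period_nat)
next
  case False
  then have k: "real_of_int k = - real (nat (-k))" by simp
  have "hh ((p + real_of_int k * pi) + real (nat (-k)) * pi) = hh (p + real_of_int k * pi)"
    by (rule hh_period_nat)
  moreover have "(p + real_of_int k * pi) + real (nat (-k)) * pi = p" by (simp only: k algebra_simps)
  ultimately show ?thesis by simp
qed


definition aa :: real where "aa = arcsin (2/pi)"

lemma two_pi: "2/pi < 1" "0 < 2/pi"
proof -
  show "0 < 2/pi" using pi_gt_zero by simp
  show "2/pi < 1" using pi_gt3 by (simp add: divide_less_eq)
qed

lemma aa_props: "sin aa = 2/pi" "0 \<le> aa" "aa \<le> pi/2" "cos aa = sqrt (1 - (2/pi)^2)"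
proof -
  have h: "-1 \<le> 2/pi" "2/pi \<le> 1" using two_pi by linarith+
  show "sin aa = 2/pi" unfolding aa_def using sin_arcsin[OF h] .
  show "0 \<le> aa" unfolding aa_def using arcsin_le_arcsin[of 0 "2/pi"] h two_pi by simp
  show "aa \<le> pi/2" unfolding aa_def using arcsin_bounded[OF h] by simp
  show "cos aa = sqrt (1 - (2/pi)^2)" unfolding aa_def using cos_arcsin[OF h] .
qed

definition uu :: "real \<Rightarrow> real" where "uu q = (1 - cos q)/4 - q/(2*pi)"

lemma uu_deriv: "(uu has_real_derivative (sin x - sin aa)/4) (at x)"
proof -
  have "(uu has_real_derivative (sin x / 4 - 1/(2*pi))) (at x)"
    unfolding uu_def[abs_def] by (auto intro!: derivative_eq_intros)
  moreover have "sin x / 4 - 1/(2*pi) = (sin x - sin aa)/4" using aa_props(1) by (simp add: field_simps)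
  ultimately show ?thesis by simp
qed

lemma uu_min: assumes "0 \<le> q" "q \<le> pi" shows "uu aa \<le> uu q"
proof -
  note ap = aa_props
  have case1: "uu aa \<le> uu q'" if "0 \<le> q'" "q' \<le> aa" for q'
  proof (rule DERIV_nonpos_imp_nonincreasing[of q' aa uu, OF that(2)])
    fix x assume x: "q' \<le> x" "x \<le> aa"
    have "sin x \<le> sin aa" by (rule sin_monotone_2pi_le) (use x that ap in auto)
    then show "\<exists>y. (uu has_real_derivative y) (at x) \<and> y \<le> 0" using uu_deriv[of x] by (intro exI[of _ "(sin x - sin aa)/4"]) auto
  qed
  show ?thesis
  proof (cases "q \<le> aa")
    case True then show ?thesis using case1 assms by auto
  next
    case False
    show ?thesis
    proof (cases "q \<le> pi - aa")
      case True
      show ?thesis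
      proof (rule DERIV_nonneg_imp_nondecreasing[of aa q uu])
        show "aa \<le> q" using False by simp
        fix x assume x: "aa \<le> x" "x \<le> q"
        have "sin aa \<le> sin x"
        proof (cases "x \<le> pi/2")
          case True then show ?thesis by (intro sin_monotone_2pi_le) (use x ap in auto)
        next
          case False
          have "sin aa \<le> sin (pi - x)" by (intro sin_monotone_2pi_le) (use x ap False \<open>q \<le> pi - aa\<close> in auto)
          then show ?thesis by simp
        qed
        then show "\<exists>y. (uu has_real_derivative y) (at x) \<and> 0 \<le> y" using uu_deriv[of x] by (intro exI[of _ "(sin x - sin aa)/4"]) auto
      qed
    next
      case False2: False
      have "uu pi \<le> uu q"
      proof (rule DERIV_nonpos_imp_nonincreasing[of q pi uu])
        show "q \<le> pi" using assms by simp
        fix x assume x: "q \<le> x" "x \<le> pi"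
        have "sin (pi - x) \<le> sin aa" by (intro sin_monotone_2pi_le) (use x ap False2 in auto)
        then show "\<exists>y. (uu has_real_derivative y) (at x) \<and> y \<le> 0" using uu_deriv[of x] by (intro exI[of _ "(sin x - sin aa)/4"]) auto
      qed
      moreover have "uu pi = 0" by (simp add: uu_def)
      moreover have "uu aa \<le> uu 0" using case1[of 0] ap by simp
      moreover have "uu 0 = 0" by (simp add: uu_def)
      ultimately show ?thesis by linarith
    qed
  qed
qed

lemma hh_min: "hh aa \<le> hh p"
proof -
  define k where "k = \<lfloor>p/pi\<rfloor>"
  define q where "q = p - real_of_int k * pi"
  have "real_of_int k \<le> p/pi" "p/pi < real_of_int k + 1" unfolding k_def by linarith+
  then have "real_of_int k * pi \<le> p" "p < (real_of_int k + 1) * pi"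
    using pi_gt_zero by (simp_all add: field_simps)
  then have q: "0 \<le> q" "q \<le> pi" unfolding q_def by (simp_all add: algebra_simps)
  have "hh p = hh q" using hh_period_int[of q k] by (simp add: q_def)
  also have "\<dots> = uu q" using GG_closed[OF q] by (simp add: hh_def uu_def)
  finally have 1: "hh p = uu q" .
  have "hh aa = uu aa" using GG_closed[of aa] aa_props pi_gt_zero by (simp add: hh_def uu_def)
  then show ?thesis using 1 uu_min[OF q] by simp
qed

lemma hh_aa: "hh aa = (1 - sqrt (1 - 4 * (1/pi)^2)) / 4 - (1/pi) / 2 * arcsin (2 * (1/pi))"
proof -
  have "hh aa = (1 - cos aa)/4 - aa/(2*pi)" using GG_closed[of aa] aa_props pi_gt_zero by (simp add: hh_def)
  also have "cos aa = sqrt (1 - 4 * (1/pi)^2)" using aa_props(4) by (simp add: power_divide)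
  finally show ?thesis by (simp add: aa_def)
qed

lemma sin_lip: fixes u v :: real shows "\<bar>sin u - sin v\<bar> \<le> \<bar>u - v\<bar>"
proof -
  have "\<bar>sin u - sin v\<bar> = 2 * \<bar>sin ((u - v)/2)\<bar> * \<bar>cos ((u + v)/2)\<bar>"
    by (simp add: sin_diff_sin abs_mult)
  also have "\<dots> \<le> 2 * \<bar>(u - v)/2\<bar> * 1"
    by (intro mult_mono abs_sin_x_le_abs_x) auto
  finally show ?thesis by simp
qed

lemma cos_lip: fixes u v :: real shows "\<bar>cos u - cos v\<bar> \<le> \<bar>u - v\<bar>"
proof -
  have "\<bar>cos u - cos v\<bar> = 2 * \<bar>sin ((u + v)/2)\<bar> * \<bar>sin ((v - u)/2)\<bar>"
    by (simp add: cos_diff_cos abs_mult)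
  also have "\<dots> \<le> 2 * 1 * \<bar>(v - u)/2\<bar>"
    by (intro mult_mono abs_sin_x_le_abs_x) auto
  finally show ?thesis by simp
qed

lemma int_sub:
  fixes f :: "real \<Rightarrow> real"
  assumes "f integrable_on {0..1}" "0 \<le> x" "x \<le> y" "y \<le> 1"
  shows "integral {x..y} f = integral {0..y} f - integral {0..x} f"
proof -
  have "f integrable_on {0..y}" by (rule integrable_on_subinterval[OF assms(1)]) (use assms in auto)
  from Henstock_Kurzweil_Integration.integral_combine[OF assms(2,3) this] show ?thesis by simp
qed

lemma chain_ineq:
  fixes \<phi> g :: "real \<Rightarrow> real"
  assumes gi: "g absolutely_integrable_on {0..1}"
  and phi: "\<And>x. x \<in> {0..1} \<Longrightarrow> \<phi> x = integral {0..x} g"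
  shows "GG (\<phi> 1) - GG (\<phi> 0) \<le> integral {0..1} (\<lambda>t. \<bar>sin (\<phi> t)\<bar> * \<bar>g t\<bar>)"
proof -
  have g_int: "g integrable_on {0..1}" and ag_int: "(\<lambda>t. \<bar>g t\<bar>) integrable_on {0..1}"
    using gi unfolding absolutely_integrable_on_def by auto
  have contphi: "continuous_on {0..1} \<phi>"
    using indefinite_integral_continuous_1[OF g_int] by (rule continuous_on_eq) (simp add: phi)
  have agi: "(\<lambda>t. \<bar>g t\<bar>) absolutely_integrable_on {0..1}"
    using ag_int unfolding absolutely_integrable_on_def by auto
  have "(\<lambda>t. \<bar>sin (\<phi> t)\<bar> * \<bar>g t\<bar>) absolutely_integrable_on {0..1}"
  proof (rule absolutely_integrable_bounded_measurable_product_real)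
    show "(\<lambda>t. \<bar>sin (\<phi> t)\<bar>) \<in> borel_measurable (lebesgue_on {0..1})"
      by (rule continuous_imp_measurable_on_sets_lebesgue) (auto intro!: continuous_intros contphi)
    show "bounded ((\<lambda>t. \<bar>sin (\<phi> t)\<bar>) ` {0..1})"
      by (rule boundedI[where B=1]) auto
  qed (use agi in auto)
  then have w_int: "(\<lambda>t. \<bar>sin (\<phi> t)\<bar> * \<bar>g t\<bar>) integrable_on {0..1}"
    unfolding absolutely_integrable_on_def by auto
  define A where "A x = integral {0..x} (\<lambda>t. \<bar>g t\<bar>)" for x
  define I where "I x = integral {0..x} (\<lambda>t. \<bar>sin (\<phi> t)\<bar> * \<bar>g t\<bar>)" for x
  have key: "GG (\<phi> 1) - GG (\<phi> 0) \<le> I 1 + \<epsilon> * A 1" if "\<epsilon> > 0" for \<epsilon>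
  proof -
    have "uniformly_continuous_on {0..1} \<phi>"
      by (rule compact_uniformly_continuous[OF contphi]) simp
    then obtain \<delta> where dpos: "\<delta> > 0"
      and dclose: "\<And>s t. s \<in> {0..1} \<Longrightarrow> t \<in> {0..1} \<Longrightarrow> dist s t < \<delta> \<Longrightarrow> dist (\<phi> s) (\<phi> t) < \<epsilon>"
      unfolding uniformly_continuous_on_def using \<open>\<epsilon> > 0\<close> by metis
    have loc: "GG (\<phi> y) - GG (\<phi> x) \<le> (I y - I x) + \<epsilon> * (A y - A x)"
      if xy: "0 \<le> x" "x \<le> y" "y \<le> 1" "y - x < \<delta>" for x y
    proof -
      have cxy: "continuous_on {x..y} \<phi>" by (rule continuous_on_subset[OF contphi]) (use xy in auto)
      obtain \<xi> where xi: "min (\<phi> x) (\<phi> y) \<le> \<xi>" "\<xi> \<le> max (\<phi> x) (\<phi> y)"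
        and mv: "GG (\<phi> y) - GG (\<phi> x) = (\<phi> y - \<phi> x) * \<bar>sin \<xi>\<bar>"
      proof (cases "\<phi> x = \<phi> y")
        case True then show ?thesis using that[of "\<phi> x"] by simp
      next
        case False
        show ?thesis
        proof (cases "\<phi> x < \<phi> y")
          case True
          from MVT2[OF True, of GG "\<lambda>p. \<bar>sin p\<bar>"] GG_deriv
          obtain z where "\<phi> x < z" "z < \<phi> y" "GG (\<phi> y) - GG (\<phi> x) = (\<phi> y - \<phi> x) * \<bar>sin z\<bar>" by blast
          then show ?thesis using that[of z] by simp
        next
          case False2: False
          then have lt: "\<phi> y < \<phi> x" using False by simp
          from MVT2[OF lt, of GG "\<lambda>p. \<bar>sin p\<bar>"] GG_deriv
          obtain z where "\<phi> y < z" "z < \<phi> x" "GG (\<phi> x) - GG (\<phi> y) = (\<phi> x - \<phi> y) * \<bar>sin z\<bar>" by blast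
          then show ?thesis using that[of z] by (simp add: algebra_simps)
        qed
      qed
      obtain z where z: "x \<le> z" "z \<le> y" "\<phi> z = \<xi>"
      proof (cases "\<phi> x \<le> \<phi> y")
        case True
        then have "\<phi> x \<le> \<xi>" "\<xi> \<le> \<phi> y" using xi by auto
        from IVT'[of \<phi> x \<xi> y, OF this xy(2) cxy] that show ?thesis by blast
      next
        case False
        then have "\<phi> y \<le> \<xi>" "\<xi> \<le> \<phi> x" using xi by auto
        from IVT2'[of \<phi> y \<xi> x, OF this xy(2) cxy] that show ?thesis by blast
      qed
      have gxy: "g integrable_on {x..y}" by (rule integrable_on_subinterval[OF g_int]) (use xy in auto)
      have agxy: "(\<lambda>t. \<bar>g t\<bar>) integrable_on {x..y}" by (rule integrable_on_subinterval[OF ag_int]) (use xy in auto)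
      have wxy: "(\<lambda>t. \<bar>sin (\<phi> t)\<bar> * \<bar>g t\<bar>) integrable_on {x..y}"
        by (rule integrable_on_subinterval[OF w_int]) (use xy in auto)
      have Adiff: "A y - A x = integral {x..y} (\<lambda>t. \<bar>g t\<bar>)"
        unfolding A_def using int_sub[OF ag_int xy(1-3)] by simp
      have Idiff: "I y - I x = integral {x..y} (\<lambda>t. \<bar>sin (\<phi> t)\<bar> * \<bar>g t\<bar>)"
        unfolding I_def using int_sub[OF w_int xy(1-3)] by simp
      have "\<phi> y - \<phi> x = integral {x..y} g"
        using phi[of x] phi[of y] int_sub[OF g_int xy(1-3)] xy by simp
      then have phidiff: "\<bar>\<phi> y - \<phi> x\<bar> \<le> A y - A x"
        using integral_norm_bound_integral[OF gxy agxy, of] Adiff by (simp add: real_norm_def)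
      have "(\<bar>sin \<xi>\<bar> - \<epsilon>) * (A y - A x) = integral {x..y} (\<lambda>t. (\<bar>sin \<xi>\<bar> - \<epsilon>) * \<bar>g t\<bar>)"
        using Adiff by (simp add: Henstock_Kurzweil_Integration.integral_mult_right)
      also have "\<dots> \<le> I y - I x"
        unfolding Idiff
      proof (rule integral_le)
        show "(\<lambda>t. (\<bar>sin \<xi>\<bar> - \<epsilon>) * \<bar>g t\<bar>) integrable_on {x..y}"
          using integrable_on_cmult_left[OF agxy] by simp
        show "(\<lambda>t. \<bar>sin (\<phi> t)\<bar> * \<bar>g t\<bar>) integrable_on {x..y}" by (rule wxy)
        fix t assume t: "t \<in> {x..y}"
        have "dist (\<phi> t) (\<phi> z) < \<epsilon>"
          by (rule dclose) (use t z xy in \<open>auto simp: dist_real_def\<close>)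
        then have "\<bar>\<phi> t - \<phi> z\<bar> < \<epsilon>" by (simp add: dist_real_def)
        moreover have "\<bar>sin (\<phi> t) - sin (\<phi> z)\<bar> \<le> \<bar>\<phi> t - \<phi> z\<bar>" by (rule sin_lip)
        moreover have "\<bar>sin (\<phi> z)\<bar> - \<bar>sin (\<phi> t)\<bar> \<le> \<bar>sin (\<phi> t) - sin (\<phi> z)\<bar>"
          using abs_triangle_ineq2[of "sin (\<phi> z)" "sin (\<phi> t)"] by (simp add: abs_minus_commute)
        ultimately have "\<bar>sin (\<phi> z)\<bar> - \<epsilon> \<le> \<bar>sin (\<phi> t)\<bar>" by linarith
        then have "\<bar>sin \<xi>\<bar> - \<epsilon> \<le> \<bar>sin (\<phi> t)\<bar>" using z(3) by simp
        then show "(\<bar>sin \<xi>\<bar> - \<epsilon>) * \<bar>g t\<bar> \<le> \<bar>sin (\<phi> t)\<bar> * \<bar>g t\<bar>"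
          by (rule mult_right_mono) simp
      qed
      finally have 1: "(\<bar>sin \<xi>\<bar> - \<epsilon>) * (A y - A x) \<le> I y - I x" .
      have "GG (\<phi> y) - GG (\<phi> x) \<le> \<bar>\<phi> y - \<phi> x\<bar> * \<bar>sin \<xi>\<bar>"
        using mv by (simp add: abs_mult[symmetric])
      also have "\<dots> \<le> (A y - A x) * \<bar>sin \<xi>\<bar>"
        by (rule mult_right_mono[OF phidiff]) simp
      finally show ?thesis using 1 by (simp add: algebra_simps)
    qed
    define D where "D z = GG (\<phi> z) - I z - \<epsilon> * A z" for z
    have glob: "\<forall>x y. 0 \<le> x \<longrightarrow> x \<le> y \<longrightarrow> y \<le> 1 \<longrightarrow> y - x \<le> real n * (\<delta>/2) \<longrightarrow> D y \<le> D x" for n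
    proof (induction n)
      case 0
      show ?case
      proof (intro allI impI)
        fix x y :: real assume "0 \<le> x" "x \<le> y" "y \<le> 1" "y - x \<le> real 0 * (\<delta>/2)"
        then show "D y \<le> D x" using loc[of x y] dpos by (simp add: D_def algebra_simps)
      qed
    next
      case (Suc n)
      show ?case
      proof (intro allI impI)
        fix x y :: real assume a: "0 \<le> x" "x \<le> y" "y \<le> 1" "y - x \<le> real (Suc n) * (\<delta>/2)"
        show "D y \<le> D x"
        proof (cases "y - x < \<delta>")
          case True then show ?thesis using loc[of x y] a by (simp add: D_def algebra_simps)
        next
          case False
          define z where "z = y - \<delta>/2"
          have "D z \<le> D x" using Suc.IH a False dpos unfolding z_def
            by (auto simp: algebra_simps)
          moreover have "D y \<le> D z" using loc[of z y] a False dpos unfolding z_def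
            by (simp add: D_def algebra_simps)
          ultimately show ?thesis by simp
        qed
      qed
    qed
    obtain n :: nat where "2/\<delta> \<le> real n" using real_arch_simple by blast
    then have "1 \<le> real n * (\<delta>/2)" using dpos by (simp add: field_simps)
    then have "D 1 \<le> D 0" using glob[of n] by auto
    moreover have "I 0 = 0" "A 0 = 0" unfolding I_def A_def by simp_all
    ultimately show ?thesis by (simp add: D_def)
  qed
  have A1: "A 1 \<ge> 0" unfolding A_def by (rule integral_nonneg[OF ag_int]) simp
  show ?thesis
  proof (rule ccontr)
    assume "\<not> ?thesis"
    then have gt: "GG (\<phi> 1) - GG (\<phi> 0) - I 1 > 0" unfolding I_def by simp
    define \<epsilon> where "\<epsilon> = (GG (\<phi> 1) - GG (\<phi> 0) - I 1) / (2 * (A 1 + 1))"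
    have "\<epsilon> > 0" unfolding \<epsilon>_def using gt A1 by simp
    have "\<epsilon> * A 1 < GG (\<phi> 1) - GG (\<phi> 0) - I 1"
    proof -
      have "\<epsilon> * A 1 \<le> \<epsilon> * (A 1 + 1)" using \<open>\<epsilon> > 0\<close> by simp
      also have "\<dots> = (GG (\<phi> 1) - GG (\<phi> 0) - I 1) / 2" unfolding \<epsilon>_def using A1 by (simp add: field_simps)
      finally show ?thesis using gt by simp
    qed
    with key[OF \<open>\<epsilon> > 0\<close>] show False by simp
  qed
qed

lemma two_ab: fixes a b :: real shows "2 * (\<bar>a\<bar> * \<bar>b\<bar>) \<le> a^2 + b^2"
proof -
  have "0 \<le> (\<bar>a\<bar> - \<bar>b\<bar>)^2" by simp
  then show ?thesis by (simp add: power2_diff power2_abs)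
qed

lemma w_integrable:
  fixes \<phi> g :: "real \<Rightarrow> real"
  assumes gi: "g absolutely_integrable_on {0..1}" and contphi: "continuous_on {0..1} \<phi>"
  shows "(\<lambda>t. \<bar>sin (\<phi> t)\<bar> * \<bar>g t\<bar>) integrable_on {0..1}"
proof -
  have ag_int: "(\<lambda>t. \<bar>g t\<bar>) integrable_on {0..1}"
    using gi unfolding absolutely_integrable_on_def by auto
  have agi: "(\<lambda>t. \<bar>g t\<bar>) absolutely_integrable_on {0..1}"
    using ag_int unfolding absolutely_integrable_on_def by auto
  have "(\<lambda>t. \<bar>sin (\<phi> t)\<bar> * \<bar>g t\<bar>) absolutely_integrable_on {0..1}"
  proof (rule absolutely_integrable_bounded_measurable_product_real)
    show "(\<lambda>t. \<bar>sin (\<phi> t)\<bar>) \<in> borel_measurable (lebesgue_on {0..1})"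
      by (rule continuous_imp_measurable_on_sets_lebesgue) (auto intro!: continuous_intros contphi)
    show "bounded ((\<lambda>t. \<bar>sin (\<phi> t)\<bar>) ` {0..1})"
      by (rule boundedI[where B=1]) auto
  qed (use agi in auto)
  then show ?thesis unfolding absolutely_integrable_on_def by auto
qed

lemma lbint_integral:
  fixes f :: "real \<Rightarrow> real"
  assumes "set_integrable lborel {a..b} f" "a \<le> b"
  shows "(LBINT x=ereal a..ereal b. f x) = integral {a..b} f"
proof -
  have "(LBINT x=ereal a..ereal b. f x) = (LBINT x:{a..b}. f x)" by (rule interval_integral_Icc[OF assms(2)])
  also have "\<dots> = integral {a..b} f" by (rule set_borel_integral_eq_integral(2)[OF assms(1)])
  finally show ?thesis .
qed

lemma lower_bound:
  fixes \<phi> g :: "real \<Rightarrow> real" and \<beta> :: real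
  assumes bpos: "\<beta> > 0" and H: "H1_with_deriv \<phi> g" and phi0: "\<phi> 0 = 0"
  shows "hh aa / \<beta> \<le> F_energy \<beta> (1/(pi*\<beta>)) \<phi> g"
proof -
  have sg: "set_integrable lborel {0..1} g"
    and sg2: "set_integrable lborel {0..1} (\<lambda>x. (g x)^2)"
    and rep0: "\<forall>x\<in>{0..1}. \<phi> x = \<phi> 0 + (LBINT t=0..x. g t)"
    using H unfolding H1_with_deriv_def by blast+
  have rep: "\<phi> x = \<phi> 0 + (LBINT t=ereal 0..ereal x. g t)" if "x \<in> {0..1}" for x
    using rep0 that unfolding zero_ereal_def by blast
  have g_int: "g integrable_on {0..1}" using set_borel_integral_eq_integral(1)[OF sg] .
  have "set_integrable lborel {0..1} (\<lambda>x. \<bar>g x\<bar>)" using sg by (rule set_integrable_abs)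
  then have ag_int: "(\<lambda>x. \<bar>g x\<bar>) integrable_on {0..1}" by (rule set_borel_integral_eq_integral(1))
  have gi: "g absolutely_integrable_on {0..1}"
    unfolding absolutely_integrable_on_def using g_int ag_int by (simp add: real_norm_def)
  have phi: "\<phi> x = integral {0..x} g" if "x \<in> {0..1}" for x
  proof -
    have "set_integrable lborel {0..x} g" by (rule set_integrable_subset[OF sg]) (use that in auto)
    then show ?thesis using rep[OF that] lbint_integral[of 0 x g] that phi0 by simp
  qed
  have contphi: "continuous_on {0..1} \<phi>"
    using indefinite_integral_continuous_1[OF g_int] by (rule continuous_on_eq) (simp add: phi)
  have chain: "GG (\<phi> 1) - GG (\<phi> 0) \<le> integral {0..1} (\<lambda>t. \<bar>sin (\<phi> t)\<bar> * \<bar>g t\<bar>)"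
    by (rule chain_ineq[OF gi phi])
  have wi: "(\<lambda>t. \<bar>sin (\<phi> t)\<bar> * \<bar>g t\<bar>) integrable_on {0..1}" by (rule w_integrable[OF gi contphi])
  have ss: "set_integrable lborel {0..1} (\<lambda>x. (sin (\<phi> x))^2 / \<beta>^2)"
    by (rule borel_integrable_atLeastAtMost') (use bpos in \<open>auto intro!: continuous_intros contphi\<close>)
  have sE: "set_integrable lborel {0..1} (\<lambda>x. (g x)^2 + (sin (\<phi> x))^2 / \<beta>^2)"
    by (rule set_integral_add(1)[OF sg2 ss])
  have E: "(LBINT x=0..1. (g x)^2 + (sin (\<phi> x))^2 / \<beta>^2) = integral {0..1} (\<lambda>x. (g x)^2 + (sin (\<phi> x))^2 / \<beta>^2)"
    unfolding zero_ereal_def one_ereal_def by (rule lbint_integral[OF sE]) simp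
  have G1: "(LBINT x=0..1. g x) = \<phi> 1"
    using rep[of 1] phi0 unfolding zero_ereal_def one_ereal_def by simp
  have "integral {0..1} (\<lambda>x. 2/\<beta> * (\<bar>sin (\<phi> x)\<bar> * \<bar>g x\<bar>)) \<le> integral {0..1} (\<lambda>x. (g x)^2 + (sin (\<phi> x))^2 / \<beta>^2)"
  proof (rule integral_le)
    show "(\<lambda>x. 2/\<beta> * (\<bar>sin (\<phi> x)\<bar> * \<bar>g x\<bar>)) integrable_on {0..1}"
      using integrable_on_cmult_left[OF wi, of "2/\<beta>"] by simp
    show "(\<lambda>x. (g x)^2 + (sin (\<phi> x))^2 / \<beta>^2) integrable_on {0..1}"
      by (rule set_borel_integral_eq_integral(1)[OF sE])
    fix x
    have "2 * (\<bar>g x\<bar> * \<bar>sin (\<phi> x) / \<beta>\<bar>) \<le> (g x)^2 + (sin (\<phi> x) / \<beta>)^2" by (rule two_ab)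
    then show "2/\<beta> * (\<bar>sin (\<phi> x)\<bar> * \<bar>g x\<bar>) \<le> (g x)^2 + (sin (\<phi> x))^2 / \<beta>^2"
      using bpos by (simp add: abs_div power_divide field_simps)
  qed
  also have "integral {0..1} (\<lambda>x. 2/\<beta> * (\<bar>sin (\<phi> x)\<bar> * \<bar>g x\<bar>)) = 2/\<beta> * integral {0..1} (\<lambda>t. \<bar>sin (\<phi> t)\<bar> * \<bar>g t\<bar>)"
    by (rule Henstock_Kurzweil_Integration.integral_mult_right)
  finally have Eb: "2/\<beta> * GG (\<phi> 1) \<le> (LBINT x=0..1. (g x)^2 + (sin (\<phi> x))^2 / \<beta>^2)"
    unfolding E using chain phi0 GG_0 bpos
    by (smt (verit, ccfv_SIG) divide_pos_pos mult_left_mono)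
  have "hh aa / \<beta> \<le> hh (\<phi> 1) / \<beta>" using hh_min bpos by (simp add: divide_right_mono)
  also have "hh (\<phi> 1) / \<beta> = 1/8 * (2/\<beta> * GG (\<phi> 1)) - 1/(pi*\<beta>)/2 * \<phi> 1"
    unfolding hh_def using bpos pi_gt_zero by (simp add: field_simps)
  also have "\<dots> \<le> F_energy \<beta> (1/(pi*\<beta>)) \<phi> g"
    unfolding F_energy_def G1 using Eb by simp
  finally show ?thesis .
qed

lemma sin_2arctan: "sin (2 * arctan u) = 2 * u / (1 + u^2)"
proof -
  have sq: "sqrt (1 + u^2) ^ 2 = 1 + u^2" by (simp add: add_pos_nonneg)
  have "sin (2 * arctan u) = 2 * sin (arctan u) * cos (arctan u)" by (rule sin_double)
  also have "\<dots> = 2 * u / (sqrt (1 + u^2))^2" by (simp add: sin_arctan cos_arctan power2_eq_square)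
  finally show ?thesis using sq by simp
qed

lemma tt_props: "0 \<le> tan (aa/2)" "tan (aa/2) \<le> 1" "2 * arctan (tan (aa/2)) = aa"
proof -
  note ap = aa_props
  show "0 \<le> tan (aa/2)" by (rule tan_pos_pi2_le) (use ap pi_gt_zero in linarith)+
  have "tan (aa/2) \<le> tan (pi/4)" by (rule tan_mono_le) (use ap pi_gt_zero in linarith)+
  then show "tan (aa/2) \<le> 1" by (simp add: tan_45)
  have "arctan (tan (aa/2)) = aa/2" by (rule arctan_tan) (use ap pi_gt_zero in linarith)+
  then show "2 * arctan (tan (aa/2)) = aa" by simp
qed

lemma upper_bound:
  fixes \<beta> :: real
  assumes bpos: "\<beta> > 0"
  shows "\<exists>\<phi> g. H1_with_deriv \<phi> g \<and> \<phi> 0 = 0 \<and>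
     F_energy \<beta> (1/(pi*\<beta>)) \<phi> g \<le> hh aa / \<beta> + 2 * exp (-1/\<beta>) / \<beta> + 4 * exp (-1/\<beta>) / \<beta>^2"
proof -
  define t where "t = tan (aa/2)"
  define \<psi> where "\<psi> x = 2 * arctan (t * exp ((x - 1)/\<beta>))" for x
  define \<epsilon> where "\<epsilon> = \<psi> 0"
  define \<phi> where "\<phi> x = \<psi> x - \<epsilon>" for x
  define g where "g x = sin (\<psi> x) / \<beta>" for x
  have t: "0 \<le> t" "t \<le> 1" using tt_props by (auto simp: t_def)
  have dpsi: "(\<psi> has_real_derivative g x) (at x)" for x
  proof -
    define u where "u = t * exp ((x - 1)/\<beta>)"
    have "(\<psi> has_real_derivative 2 * (inverse (1 + u^2) * (t * (exp ((x - 1)/\<beta>) * (1/\<beta>))))) (at x)"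
      unfolding \<psi>_def[abs_def] u_def using bpos
      by (auto intro!: derivative_eq_intros simp: field_simps power2_eq_square)
    moreover have "2 * (inverse (1 + u^2) * (t * (exp ((x - 1)/\<beta>) * (1/\<beta>)))) = g x"
      unfolding g_def \<psi>_def sin_2arctan u_def[symmetric]
      using bpos by (simp add: u_def field_simps)
    ultimately show ?thesis by simp
  qed
  have dphi: "(\<phi> has_real_derivative g x) (at x)" for x
    unfolding \<phi>_def[abs_def] using DERIV_diff[OF dpsi[of x] DERIV_const[of \<epsilon> "at x"]] by simp
  have contg: "continuous_on S g" for S
    unfolding g_def[abs_def] \<psi>_def[abs_def] using bpos by (auto intro!: continuous_intros)
  have contphi: "continuous_on S \<phi>" for S
    using dphi by (meson DERIV_isCont continuous_at_imp_continuous_on)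
  have psi1: "\<psi> 1 = aa" unfolding \<psi>_def t_def using tt_props by simp
  have eps0: "0 \<le> \<epsilon>" unfolding \<epsilon>_def \<psi>_def using t by simp
  have eps1: "\<epsilon> \<le> 2 * exp (-1/\<beta>)"
  proof -
    have "\<epsilon> \<le> 2 * (t * exp ((0 - 1)/\<beta>))"
      unfolding \<epsilon>_def \<psi>_def using arctan_le_self[of "t * exp ((0 - 1)/\<beta>)"] t by simp
    also have "\<dots> \<le> 2 * (1 * exp ((0 - 1)/\<beta>))" using t by (intro mult_left_mono mult_right_mono) auto
    finally show ?thesis by simp
  qed
  have phi0: "\<phi> 0 = 0" by (simp add: \<phi>_def \<epsilon>_def)
  have phi1: "\<phi> 1 = aa - \<epsilon>" by (simp add: \<phi>_def psi1)
  have FTC: "(LBINT t=ereal a..ereal b. g t) = \<phi> b - \<phi> a" for a b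
  proof (rule interval_integral_FTC_finite)
    show "continuous_on {min a b..max a b} g" by (rule contg)
    fix x show "(\<phi> has_vector_derivative g x) (at x within {min a b..max a b})"
      using dphi[of x] by (simp add: has_real_derivative_iff_has_vector_derivative has_vector_derivative_at_within)
  qed
  have sg: "set_integrable lborel {0..1} g" by (rule borel_integrable_atLeastAtMost') (rule contg)
  have sg2: "set_integrable lborel {0..1} (\<lambda>x. (g x)^2)"
    by (rule borel_integrable_atLeastAtMost') (intro continuous_intros contg)
  have H: "H1_with_deriv \<phi> g"
    unfolding H1_with_deriv_def
  proof (intro conjI sg sg2 ballI)
    fix x :: real assume "x \<in> {0..1}"
    show "\<phi> x = \<phi> 0 + (LBINT t=0..x. g t)" unfolding zero_ereal_def FTC by simp
  qed
  have L: "(LBINT x=0..1. g x) = aa - \<epsilon>" unfolding zero_ereal_def one_ereal_def FTC phi0 phi1 by simp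
  define k where "k x = (g x)^2 + (sin (\<phi> x))^2 / \<beta>^2" for x
  define c where "c = \<epsilon>^2 / \<beta>^2"
  have sk: "set_integrable lborel {0..1} k"
    unfolding k_def by (rule borel_integrable_atLeastAtMost') (use bpos in \<open>auto intro!: continuous_intros contg contphi\<close>)
  have E: "(LBINT x=0..1. (g x)^2 + (sin (\<phi> x))^2 / \<beta>^2) = integral {0..1} k"
    unfolding zero_ereal_def one_ereal_def k_def[symmetric] by (rule lbint_integral[OF sk]) simp
  define P where "P x = c * x - 2 * cos (\<phi> x) / \<beta>" for x
  have "((\<lambda>x. c + 2 * (g x * sin (\<phi> x)) / \<beta>) has_integral P 1 - P 0) {0..1}"
  proof (rule fundamental_theorem_of_calculus)
    fix x :: real assume "x \<in> {0..1}"
    have "(P has_real_derivative c * 1 - 2 * (- (g x * sin (\<phi> x))) / \<beta>) (at x)"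
      unfolding P_def[abs_def] using bpos
      by (auto intro!: derivative_eq_intros dphi simp: field_simps)
    then have "(P has_real_derivative c + 2 * (g x * sin (\<phi> x)) / \<beta>) (at x within {0..1})"
      by (simp add: has_field_derivative_at_within)
    then show "(P has_vector_derivative c + 2 * (g x * sin (\<phi> x)) / \<beta>) (at x within {0..1})"
      unfolding has_real_derivative_iff_has_vector_derivative .
  qed simp
  then have Pint: "integral {0..1} (\<lambda>x. c + 2 * (g x * sin (\<phi> x)) / \<beta>) = P 1 - P 0"
    and Pi: "(\<lambda>x. c + 2 * (g x * sin (\<phi> x)) / \<beta>) integrable_on {0..1}"
    by (auto simp: integral_unique has_integral_integrable)
  have "integral {0..1} k \<le> integral {0..1} (\<lambda>x. c + 2 * (g x * sin (\<phi> x)) / \<beta>)"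
  proof (rule integral_le)
    show "k integrable_on {0..1}" by (rule set_borel_integral_eq_integral(1)[OF sk])
    show "(\<lambda>x. c + 2 * (g x * sin (\<phi> x)) / \<beta>) integrable_on {0..1}" by (rule Pi)
    fix x
    have "\<bar>sin (\<psi> x) - sin (\<phi> x)\<bar> \<le> \<bar>\<psi> x - \<phi> x\<bar>" by (rule sin_lip)
    then have "\<bar>sin (\<psi> x) - sin (\<phi> x)\<bar> \<le> \<epsilon>" using eps0 by (simp add: \<phi>_def)
    then have "(sin (\<psi> x) - sin (\<phi> x))^2 \<le> \<epsilon>^2"
      by (metis abs_ge_zero power2_abs power_mono)
    then have "(sin (\<psi> x) - sin (\<phi> x))^2 / \<beta>^2 \<le> \<epsilon>^2 / \<beta>^2"
      by (simp add: divide_right_mono)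
    moreover have "k x = (sin (\<psi> x) - sin (\<phi> x))^2 / \<beta>^2 + 2 * (g x * sin (\<phi> x)) / \<beta>"
      unfolding k_def g_def using bpos by (simp add: field_simps power2_eq_square)
    ultimately show "k x \<le> c + 2 * (g x * sin (\<phi> x)) / \<beta>" unfolding c_def by simp
  qed
  also have "\<dots> = c + 2 * (1 - cos (aa - \<epsilon>)) / \<beta>"
    unfolding Pint P_def phi0 phi1 using bpos by (simp add: field_simps)
  finally have Eb: "(LBINT x=0..1. (g x)^2 + (sin (\<phi> x))^2 / \<beta>^2) \<le> c + 2 * (1 - cos (aa - \<epsilon>)) / \<beta>"
    unfolding E .
  have cosb: "1 - cos (aa - \<epsilon>) \<le> 1 - cos aa + \<epsilon>"
    using cos_lip[of aa "aa - \<epsilon>"] eps0 by simp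
  have hha: "hh aa = (1 - cos aa)/4 - aa/(2*pi)"
    using GG_closed[of aa] aa_props pi_gt_zero by (simp add: hh_def)
  have "F_energy \<beta> (1/(pi*\<beta>)) \<phi> g \<le> 1/8 * (c + 2 * (1 - cos aa + \<epsilon>) / \<beta>) - 1/(pi*\<beta>)/2 * (aa - \<epsilon>)"
  proof -
    have "2 * (1 - cos (aa - \<epsilon>)) / \<beta> \<le> 2 * (1 - cos aa + \<epsilon>) / \<beta>"
      using cosb bpos by (simp add: divide_right_mono)
    then show ?thesis unfolding F_energy_def L using Eb by simp
  qed
  also have "\<dots> = hh aa / \<beta> + \<epsilon> * (1/(4*\<beta>) + 1/(2*pi*\<beta>)) + \<epsilon>^2 / (8 * \<beta>^2)"
    unfolding hha c_def using bpos pi_gt_zero by (simp add: field_simps)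
  also have "\<dots> \<le> hh aa / \<beta> + 2 * exp (-1/\<beta>) / \<beta> + 4 * exp (-1/\<beta>) / \<beta>^2"
  proof -
    have pi3: "pi > 3" by (rule pi_gt3)
    have "1/(4*\<beta>) + 1/(2*pi*\<beta>) \<le> 1/\<beta>"
      using bpos pi3 by (simp add: field_simps)
    then have "\<epsilon> * (1/(4*\<beta>) + 1/(2*pi*\<beta>)) \<le> 2 * exp (-1/\<beta>) * (1/\<beta>)"
      using eps0 eps1 bpos by (intro mult_mono) auto
    define e where "e = exp (-1/\<beta>)"
    have e01: "0 \<le> e" "e \<le> 1" using bpos by (auto simp: e_def)
    have "\<epsilon>^2 \<le> (2 * e)^2" using eps0 eps1 unfolding e_def by (intro power_mono) auto
    also have "\<dots> = 4 * (e * e)" by (simp add: power2_eq_square)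
    also have "\<dots> \<le> 4 * e" using e01 by (simp add: mult_left_le_one_le)
    finally have "\<epsilon>^2 \<le> 4 * e" .
    then have "\<epsilon>^2 / (8 * \<beta>^2) \<le> 4 * e / \<beta>^2"
      using bpos eps0 e01 by (simp add: divide_simps)
    then have "\<epsilon>^2 / (8 * \<beta>^2) \<le> 4 * exp (-1/\<beta>) / \<beta>^2" by (simp add: e_def)
    with \<open>\<epsilon> * _ \<le> _\<close> show ?thesis by simp
  qed
  finally show ?thesis using H phi0 by blast
qed

lemma minF_bounds:
  fixes \<beta> :: real assumes bpos: "\<beta> > 0"
  shows "hh aa / \<beta> \<le> min_F \<beta> (1/(pi*\<beta>))"
    "min_F \<beta> (1/(pi*\<beta>)) \<le> hh aa / \<beta> + 2 * exp (-1/\<beta>) / \<beta> + 4 * exp (-1/\<beta>) / \<beta>^2"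
proof -
  define S where "S = {F_energy \<beta> (1/(pi*\<beta>)) \<phi> g | \<phi> g. H1_with_deriv \<phi> g \<and> \<phi> 0 = 0}"
  have mS: "min_F \<beta> (1/(pi*\<beta>)) = Inf S" unfolding S_def min_F_def by simp
  obtain \<phi> g where H: "H1_with_deriv \<phi> g" "\<phi> 0 = 0"
    and Fb: "F_energy \<beta> (1/(pi*\<beta>)) \<phi> g \<le> hh aa / \<beta> + 2 * exp (-1/\<beta>) / \<beta> + 4 * exp (-1/\<beta>) / \<beta>^2"
    using upper_bound[OF bpos] by blast
  have inS: "F_energy \<beta> (1/(pi*\<beta>)) \<phi> g \<in> S" unfolding S_def using H by blast
  have lb: "\<And>x. x \<in> S \<Longrightarrow> hh aa / \<beta> \<le> x" unfolding S_def using lower_bound[OF bpos] by blast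
  have bdd: "bdd_below S" using lb by (intro bdd_belowI) 
  show "hh aa / \<beta> \<le> min_F \<beta> (1/(pi*\<beta>))" unfolding mS
    by (rule cInf_greatest) (use inS lb in auto)
  have "Inf S \<le> F_energy \<beta> (1/(pi*\<beta>)) \<phi> g" by (rule cInf_lower[OF inS bdd])
  then show "min_F \<beta> (1/(pi*\<beta>)) \<le> hh aa / \<beta> + 2 * exp (-1/\<beta>) / \<beta> + 4 * exp (-1/\<beta>) / \<beta>^2"
    unfolding mS using Fb by simp
qed

lemma U_lim: "((\<lambda>x. 2 * (inverse x ^ (n+1) / exp (inverse x)) + 4 * (inverse x ^ (n+2) / exp (inverse x))) \<longlongrightarrow> 0) (at_right (0::real))"
proof -
  have l: "((\<lambda>x. inverse x ^ k / exp (inverse x)) \<longlongrightarrow> 0) (at_right (0::real))" for k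
    using filterlim_compose[OF tendsto_power_div_exp_0 filterlim_inverse_at_top_right] by (simp add: o_def)
  have "((\<lambda>x. 2 * (inverse x ^ (n+1) / exp (inverse x)) + 4 * (inverse x ^ (n+2) / exp (inverse x))) \<longlongrightarrow> 2 * 0 + 4 * 0) (at_right (0::real))"
    by (intro tendsto_intros l)
  then show ?thesis by simp
qed

theorem proposition8:
  shows "\<forall>n::nat. n \<ge> 1 \<longrightarrow>
    (\<lambda>\<beta>::real. min_F \<beta> (1 / (pi * \<beta>))
        - ((1 - sqrt (1 - 4 * (1/pi)^2)) / (4 * \<beta>) - (1/pi) / (2 * \<beta>) * arcsin (2 * (1/pi))))
      \<in> o[at_right 0](\<lambda>\<beta>. \<beta> ^ n)"
proof (intro allI impI)
  fix n :: nat assume "n \<ge> 1"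
  define f where "f \<beta> = min_F \<beta> (1 / (pi * \<beta>))
        - ((1 - sqrt (1 - 4 * (1/pi)^2)) / (4 * \<beta>) - (1/pi) / (2 * \<beta>) * arcsin (2 * (1/pi)))" for \<beta> :: real
  define U where "U x = 2 * (inverse x ^ (n+1) / exp (inverse x)) + 4 * (inverse x ^ (n+2) / exp (inverse x))" for x :: real
  have fb: "0 \<le> f \<beta> / \<beta>^n \<and> f \<beta> / \<beta>^n \<le> U \<beta>" if bpos: "\<beta> > 0" for \<beta>
  proof -
    have M: "(1 - sqrt (1 - 4 * (1/pi)^2)) / (4 * \<beta>) - (1/pi) / (2 * \<beta>) * arcsin (2 * (1/pi)) = hh aa / \<beta>"
      unfolding hh_aa using bpos by (simp add: field_simps)
    have f0: "0 \<le> f \<beta>" and f1: "f \<beta> \<le> 2 * exp (-1/\<beta>) / \<beta> + 4 * exp (-1/\<beta>) / \<beta>^2"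
      unfolding f_def M using minF_bounds[OF bpos] by auto
    have bn: "\<beta>^n > 0" using bpos by simp
    have "f \<beta> / \<beta>^n \<le> (2 * exp (-1/\<beta>) / \<beta> + 4 * exp (-1/\<beta>) / \<beta>^2) / \<beta>^n"
      using f1 bn by (simp add: divide_right_mono)
    also have "\<dots> = U \<beta>"
      unfolding U_def using bpos by (simp add: exp_minus power_inverse field_simps power_add power2_eq_square)
    finally show ?thesis using f0 bn by simp
  qed
  have ev: "\<forall>\<^sub>F \<beta> in at_right (0::real). \<beta> > 0" by (rule eventually_at_right_less)
  have "((\<lambda>\<beta>. f \<beta> / \<beta>^n) \<longlongrightarrow> 0) (at_right 0)"
  proof (rule tendsto_sandwich[of "\<lambda>_. 0" _ _ U])
    show "\<forall>\<^sub>F \<beta> in at_right 0. 0 \<le> f \<beta> / \<beta>^n" using ev by (rule eventually_mono) (use fb in auto)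
    show "\<forall>\<^sub>F \<beta> in at_right 0. f \<beta> / \<beta>^n \<le> U \<beta>" using ev by (rule eventually_mono) (use fb in auto)
    show "((\<lambda>_. 0) \<longlongrightarrow> (0::real)) (at_right 0)" by simp
    show "(U \<longlongrightarrow> 0) (at_right 0)" unfolding U_def[abs_def] by (rule U_lim)
  qed
  moreover have "\<forall>\<^sub>F \<beta> in at_right (0::real). \<beta>^n \<noteq> 0" using ev by (rule eventually_mono) simp
  ultimately have "f \<in> o[at_right 0](\<lambda>\<beta>. \<beta>^n)" by (rule smalloI_tendsto)
  then show "(\<lambda>\<beta>::real. min_F \<beta> (1 / (pi * \<beta>))
        - ((1 - sqrt (1 - 4 * (1/pi)^2)) / (4 * \<beta>) - (1/pi) / (2 * \<beta>) * arcsin (2 * (1/pi))))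
      \<in> o[at_right 0](\<lambda>\<beta>. \<beta> ^ n)" unfolding f_def[abs_def] .
qed

end
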